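(* Let $p,q\in(0,1)$, let $x,y,k$ be natural numbers and $N,T$ be positive integers. Then $$\mathbb{P}^{(x,y)}_{p,q}(Z_T\ge kN)\ge\gamma^{*a}([k,+\infty)),$$ where $a=\min(\lfloor x/N\rfloor,\lfloor y/N\rfloor)$ and $\gamma$ is the law of $\lfloor Z_T/N\rfloor$ under $\mathbb{P}^{(N,N)}_{p,q}$ (with the convention $\gamma^{*0}=\delta_0$).
   Context: Cooperative model: for $p,q\in(0,1)$, a Markov chain $(X_n,Y_n)_{n\ge0}$ on $\mathbb{N}^2$ whose transition law from state $(x,y)$ is $\mu_{(x,y)}=\mathrm{Bin}(2,q)^{*(x+y)}\otimes\mathrm{Bin}(2,p)^{*\min(x,y)}$, i.e. given the past, $X_{n+1}\sim\mathrm{Bin}(2(X_n+Y_n),q)$ and $Y_{n+1}\sim\mathrm{Bin}(2\min(X_n,Y_n),p)$ are independent. $\mathbb{P}^{(x,y)}_{p,q}$ denotes the law of this process started from $(x,y)$. $Z_n=\min(X_n,Y_n)$. *)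

theory Defs
  imports "HOL-Probability.Probability"
begin

text \<open>One-step transition law of the cooperative model from state (x,y):
  X' ~ Bin(2(x+y), q) and Y' ~ Bin(2 min(x,y), p), independent.
  (Bin(2,q)^{*n} = Bin(2n,q).)\<close>
definition coop_step :: "real \<Rightarrow> real \<Rightarrow> nat \<times> nat \<Rightarrow> (nat \<times> nat) pmf" where
  "coop_step p q s = (case s of (x, y) \<Rightarrow>
     pair_pmf (binomial_pmf (2 * (x + y)) q) (binomial_pmf (2 * min x y) p))"

definition coop_law :: "real \<Rightarrow> real \<Rightarrow> nat \<times> nat \<Rightarrow> nat \<Rightarrow> (nat \<times> nat) pmf" where
  "coop_law p q s0 n = ((\<lambda>m. bind_pmf m (coop_step p q)) ^^ n) (return_pmf s0)"

definition coop_Z_law :: "real \<Rightarrow> real \<Rightarrow> nat \<times> nat \<Rightarrow> nat \<Rightarrow> nat pmf" where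
  "coop_Z_law p q s0 n = map_pmf (\<lambda>(x, y). min x y) (coop_law p q s0 n)"

fun conv_pow :: "nat pmf \<Rightarrow> nat \<Rightarrow> nat pmf" where
  "conv_pow g 0 = return_pmf 0"
| "conv_pow g (Suc a) = bind_pmf g (\<lambda>u. map_pmf (\<lambda>v. u + v) (conv_pow g a))"

end

theory Submission
  imports Defs
begin

definition sumN :: "nat pmf \<Rightarrow> nat pmf \<Rightarrow> nat pmf" where
  "sumN A B = bind_pmf A (\<lambda>a. map_pmf (\<lambda>b. a + b) B)"

definition padd :: "nat \<times> nat \<Rightarrow> nat \<times> nat \<Rightarrow> nat \<times> nat" where
  "padd a b = (fst a + fst b, snd a + snd b)"

definition sumP :: "(nat \<times> nat) pmf \<Rightarrow> (nat \<times> nat) pmf \<Rightarrow> (nat \<times> nat) pmf" where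
  "sumP A B = bind_pmf A (\<lambda>a. map_pmf (padd a) B)"

abbreviation ple :: "nat \<times> nat \<Rightarrow> nat \<times> nat \<Rightarrow> bool" where
  "ple \<equiv> rel_prod (\<le>) (\<le>)"

lemma bin_add:
  assumes "p \<in> {0..1}"
  shows "binomial_pmf (n + m) p = sumN (binomial_pmf n p) (binomial_pmf m p)"
proof (induction n)
  case 0
  have e: "((+) (0::nat)) = id" by auto
  then show ?case using assms by (simp add: sumN_def binomial_pmf_0 bind_return_pmf e)
next
  case (Suc n)
  have "binomial_pmf (Suc n + m) p = binomial_pmf (Suc (n + m)) p" by simp
  also have "\<dots> = sumN (binomial_pmf (Suc n) p) (binomial_pmf m p)"
    using assms Suc
    by (simp add: binomial_pmf_Suc sumN_def bind_assoc_pmf bind_return_pmf map_pmf_def add.assoc)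
  finally show ?case .
qed

lemma sumN_ge: "rel_pmf (\<le>) A (sumN A B)"
proof -
  have "rel_pmf (\<le>) (bind_pmf A return_pmf) (sumN A B)"
    unfolding sumN_def
    by (rule rel_pmf_bindI[where R="(=)"]) (auto intro: rel_pmf_reflI simp: rel_pmf_return_pmf1)
  then show ?thesis by (simp add: bind_return_pmf')
qed

lemma bin_mono:
  assumes "p \<in> {0..1}" "n \<le> n'"
  shows "rel_pmf (\<le>) (binomial_pmf n p) (binomial_pmf n' p)"
proof -
  have "binomial_pmf n' p = sumN (binomial_pmf n p) (binomial_pmf (n' - n) p)"
    using bin_add[OF assms(1), of n "n' - n"] assms(2) by simp
  then show ?thesis using sumN_ge by simp
qed

lemma bin_super:
  assumes "p \<in> {0..1}" "n + m \<le> n'"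
  shows "rel_pmf (\<le>) (sumN (binomial_pmf n p) (binomial_pmf m p)) (binomial_pmf n' p)"
  using bin_mono[OF assms] bin_add[OF assms(1)] by simp

lemma sumP_pair:
  "sumP (pair_pmf B1 C1) (pair_pmf B2 C2) = pair_pmf (sumN B1 B2) (sumN C1 C2)"
  apply (simp add: sumP_def pair_pmf_def sumN_def map_pmf_def bind_assoc_pmf bind_return_pmf padd_def)
  apply (rule bind_pmf_cong[OF refl])
  apply (subst bind_commute_pmf)
  apply simp
  done

lemma step_super:
  assumes "p \<in> {0..1}" "q \<in> {0..1}" "ple (padd s1 s2) s"
  shows "rel_pmf ple (sumP (coop_step p q s1) (coop_step p q s2)) (coop_step p q s)"
proof -
  obtain x1 y1 where s1: "s1 = (x1, y1)" by (cases s1)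
  obtain x2 y2 where s2: "s2 = (x2, y2)" by (cases s2)
  obtain x y where s: "s = (x, y)" by (cases s)
  have h: "x1 + x2 \<le> x" "y1 + y2 \<le> y" using assms(3) by (auto simp: s1 s2 s padd_def)
  have h2: "2 * min x1 y1 + 2 * min x2 y2 \<le> 2 * min x y" using h by linarith
  have h1: "2 * (x1 + y1) + 2 * (x2 + y2) \<le> 2 * (x + y)" using h by auto
  show ?thesis unfolding s1 s2 s coop_step_def prod.case sumP_pair rel_pmf_rel_prod
    using bin_super[OF assms(2) h1] bin_super[OF assms(1) h2] by blast
qed

lemma step_mono:
  assumes "p \<in> {0..1}" "q \<in> {0..1}" "ple s s'"
  shows "rel_pmf ple (coop_step p q s) (coop_step p q s')"
proof -
  obtain x1 y1 where s1: "s = (x1, y1)" by (cases s)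
  obtain x y where s: "s' = (x, y)" by (cases s')
  have h: "x1 \<le> x" "y1 \<le> y" using assms(3) by (auto simp: s1 s)
  have h2: "2 * min x1 y1 \<le> 2 * min x y" using h by linarith
  have h1: "2 * (x1 + y1) \<le> 2 * (x + y)" using h by auto
  show ?thesis unfolding s1 s coop_step_def prod.case rel_pmf_rel_prod
    using bin_mono[OF assms(2) h1] bin_mono[OF assms(1) h2] by blast
qed

lemma law_0: "coop_law p q s 0 = return_pmf s"
  by (simp add: coop_law_def)

lemma law_Suc: "coop_law p q s (Suc n) = bind_pmf (coop_law p q s n) (coop_step p q)"
  by (simp add: coop_law_def)

lemma law_mono:
  assumes "p \<in> {0..1}" "q \<in> {0..1}" "ple s s'"
  shows "rel_pmf ple (coop_law p q s n) (coop_law p q s' n)"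
proof (induction n)
  case 0
  then show ?case using assms by (simp add: law_0)
next
  case (Suc n)
  then show ?case unfolding law_Suc
    by (rule rel_pmf_bindI) (rule step_mono[OF assms(1,2)])
qed

lemma sumP_bind:
  "sumP (bind_pmf A f) (bind_pmf B g) = bind_pmf (pair_pmf A B) (\<lambda>(a, b). sumP (f a) (g b))"
  apply (simp add: sumP_def pair_pmf_def map_pmf_def bind_assoc_pmf bind_return_pmf)
  apply (rule bind_pmf_cong[OF refl])
  apply (subst bind_commute_pmf)
  apply simp
  done

lemma sumP_map: "sumP A B = map_pmf (\<lambda>(a, b). padd a b) (pair_pmf A B)"
  by (simp add: sumP_def pair_pmf_def map_pmf_def bind_assoc_pmf bind_return_pmf)

lemma law_super:
  assumes "p \<in> {0..1}" "q \<in> {0..1}" "ple (padd s1 s2) s"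
  shows "rel_pmf ple (sumP (coop_law p q s1 n) (coop_law p q s2 n)) (coop_law p q s n)"
proof (induction n)
  case 0
  then show ?case using assms by (simp add: law_0 sumP_def bind_return_pmf)
next
  case (Suc n)
  have "rel_pmf (\<lambda>(a, b) c. ple (padd a b) c) (pair_pmf (coop_law p q s1 n) (coop_law p q s2 n)) (coop_law p q s n)"
    using Suc by (simp add: sumP_map pmf.rel_map split_beta')
  then show ?case unfolding law_Suc sumP_bind
    by (rule rel_pmf_bindI) (auto intro: step_super[OF assms(1,2)])
qed

lemma sumN_rel:
  assumes "rel_pmf (\<le>) A A'" "rel_pmf (\<le>) B B'"
  shows "rel_pmf (\<le>) (sumN A B) (sumN A' B')"
  unfolding sumN_def
proof (rule rel_pmf_bindI[OF assms(1)])
  fix a a' :: nat assume "a \<le> a'"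
  then have "rel_pmf (\<lambda>b b'. a + b \<le> a' + b') B B'"
    using pmf.rel_mono_strong[OF assms(2)] by (metis add_mono)
  then show "rel_pmf (\<le>) (map_pmf ((+) a) B) (map_pmf ((+) a') B')"
    by (simp add: pmf.rel_map)
qed

lemma sumN_map: "sumN (map_pmf h L1) (map_pmf h L2) = map_pmf (\<lambda>(a, b). h a + h b) (pair_pmf L1 L2)"
  by (simp add: sumN_def pair_pmf_def map_pmf_def bind_assoc_pmf bind_return_pmf)

lemma rel_trans_nat:
  assumes "rel_pmf (\<le>) A B" "rel_pmf (\<le>) B (C :: nat pmf)"
  shows "rel_pmf (\<le>) A C"
proof -
  have "rel_pmf ((\<le>) OO (\<le>)) A C" using assms by (auto simp: pmf.rel_compp)
  then show ?thesis by (rule pmf.rel_mono_strong) auto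
qed

lemma div_super: "(a::nat) div N + b div N \<le> (a + b) div N"
  by (metis div_add1_eq le_add1)

lemma conv_main:
  fixes N T a :: nat
  assumes "p \<in> {0..1}" "q \<in> {0..1}"
  defines "h \<equiv> (\<lambda>s::nat \<times> nat. min (fst s) (snd s) div N)"
  shows "rel_pmf (\<le>) (conv_pow (map_pmf h (coop_law p q (N, N) T)) a)
                        (map_pmf h (coop_law p q (a * N, a * N) T))"
proof (induction a)
  case 0
  then show ?case by (simp add: rel_pmf_return_pmf1)
next
  case (Suc a)
  let ?g = "map_pmf h (coop_law p q (N, N) T)"
  have "conv_pow ?g (Suc a) = sumN ?g (conv_pow ?g a)" by (simp add: sumN_def)
  moreover have "rel_pmf (\<le>) (sumN ?g (conv_pow ?g a)) (sumN ?g (map_pmf h (coop_law p q (a * N, a * N) T)))"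
    by (rule sumN_rel[OF rel_pmf_reflI Suc]) auto
  moreover have "rel_pmf (\<le>) (sumN ?g (map_pmf h (coop_law p q (a * N, a * N) T)))
                    (map_pmf h (coop_law p q (Suc a * N, Suc a * N) T))"
  proof -
    have "ple (padd (N, N) (a * N, a * N)) (Suc a * N, Suc a * N)" by (simp add: padd_def)
    from law_super[OF assms(1,2) this, of T]
    have "rel_pmf (\<lambda>(u, v) c. ple (padd u v) c) (pair_pmf (coop_law p q (N, N) T) (coop_law p q (a * N, a * N) T))
            (coop_law p q (Suc a * N, Suc a * N) T)"
      by (simp add: sumP_map pmf.rel_map split_beta')
    then have "rel_pmf (\<lambda>uv c. h (fst uv) + h (snd uv) \<le> h c) (pair_pmf (coop_law p q (N, N) T) (coop_law p q (a * N, a * N) T))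
            (coop_law p q (Suc a * N, Suc a * N) T)"
    proof (rule pmf.rel_mono_strong)
      fix uv c assume "(case uv of (u, v) \<Rightarrow> \<lambda>c. ple (padd u v) c) c"
      then obtain u1 u2 v1 v2 c1 c2 where e: "uv = ((u1, u2), (v1, v2))" "c = (c1, c2)"
        and le: "u1 + v1 \<le> c1" "u2 + v2 \<le> c2"
        by (cases uv; cases "fst uv"; cases "snd uv"; cases c) (auto simp: padd_def)
      have "min u1 u2 div N + min v1 v2 div N \<le> (min u1 u2 + min v1 v2) div N" by (rule div_super)
      also have "\<dots> \<le> min c1 c2 div N" using le by (intro div_le_mono) auto
      finally show "h (fst uv) + h (snd uv) \<le> h c" by (simp add: e h_def)
    qed
    then show ?thesis by (simp add: sumN_map pmf.rel_map split_beta')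
  qed
  ultimately show ?case using rel_trans_nat by metis
qed

theorem lemma2:
  fixes p q :: real and x y k N T :: nat
  assumes "0 < p" "p < 1" "0 < q" "q < 1" "0 < N" "0 < T"
  shows "measure_pmf.prob (coop_Z_law p q (x, y) T) {k * N..}
    \<ge> measure_pmf.prob
        (conv_pow (map_pmf (\<lambda>z. z div N) (coop_Z_law p q (N, N) T)) (min (x div N) (y div N)))
        {k..}"
proof -
  define h where "h = (\<lambda>s::nat \<times> nat. min (fst s) (snd s) div N)"
  define a where "a = min (x div N) (y div N)"
  have pq: "p \<in> {0..1}" "q \<in> {0..1}" using assms by auto
  have g: "map_pmf (\<lambda>z. z div N) (coop_Z_law p q (N, N) T) = map_pmf h (coop_law p q (N, N) T)"
    by (simp add: coop_Z_law_def pmf.map_comp h_def o_def split_beta')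
  have r1: "rel_pmf (\<le>) (conv_pow (map_pmf h (coop_law p q (N, N) T)) a)
                        (map_pmf h (coop_law p q (a * N, a * N) T))"
    using conv_main[OF pq, of N T a] by (simp add: h_def)
  have "a * N \<le> x" "a * N \<le> y" unfolding a_def
    by (metis min.cobounded1 min.cobounded2 div_times_less_eq_dividend le_trans mult_le_mono1)+
  then have "ple (a * N, a * N) (x, y)" by simp
  from law_mono[OF pq this, of T]
  have r2: "rel_pmf (\<le>) (map_pmf h (coop_law p q (a * N, a * N) T)) (map_pmf h (coop_law p q (x, y) T))"
    unfolding pmf.rel_map
    by (rule pmf.rel_mono_strong) (auto simp: h_def intro!: div_le_mono)
  have r: "rel_pmf (\<le>) (conv_pow (map_pmf h (coop_law p q (N, N) T)) a) (map_pmf h (coop_law p q (x, y) T))"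
    using rel_trans_nat[OF r1 r2] .
  have m: "measure (conv_pow (map_pmf h (coop_law p q (N, N) T)) a) {z. k \<le> z}
        \<le> measure (map_pmf h (coop_law p q (x, y) T)) {z. k \<le> z}"
    by (rule measure_Ici[OF r]) (auto simp: reflp_def transp_def)
  have e: "measure_pmf.prob (coop_Z_law p q (x, y) T) {k * N..} = measure (map_pmf h (coop_law p q (x, y) T)) {z. k \<le> z}"
  proof -
    have "coop_Z_law p q (x, y) T = map_pmf (\<lambda>s. min (fst s) (snd s)) (coop_law p q (x, y) T)"
      by (simp add: coop_Z_law_def split_beta')
    moreover have "map_pmf h (coop_law p q (x, y) T) = map_pmf (\<lambda>z. z div N) (map_pmf (\<lambda>s. min (fst s) (snd s)) (coop_law p q (x, y) T))"
      by (simp add: pmf.map_comp h_def o_def)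
    moreover have "(\<lambda>z. z div N) -` {z. k \<le> z} = {k * N..}"
      using assms(5) by (auto simp: less_eq_div_iff_mult_less_eq)
    ultimately show ?thesis by (simp add: measure_map_pmf)
  qed
  show ?thesis unfolding g e a_def[symmetric] using m by (simp add: atLeast_def)
qed

end
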